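(* Under the standing assumptions below, for any finite partitions $\mathcal P_1,\mathcal P_2$ of $\lambda$, $I(\mathcal P_1\sqcap\mathcal P_2)=I(\mathcal P_1)\cap I(\mathcal P_2)$.
   Context: Standing assumptions: $G$ is a finite graph with at least one edge which is trivially power-colorable (for every positive integer $n$, every $\chi(G)$-coloring of $G^n$ is of the form $v\mapsto\phi(v_i)$ for some coordinate $i$ and proper coloring $\phi$ of $G$), $k=\chi(G)$, $\lambda$ is an infinite cardinal, and $\Phi$ is a fixed proper $k$-coloring of $G^\lambda$ (vertex set $V(G)^\lambda$, $(v_\xi)$ adjacent to $(w_\xi)$ iff $v_\xi w_\xi\in E(G)$ for all $\xi<\lambda$). A finite partition of $\lambda$ is a partition of $\lambda$ into finitely many nonempty pieces. For a finite partition $\mathcal P$, $V_{\mathcal P}=\{\mathbf v\in V(G^\lambda): \mathbf v\restriction A \text{ is constant for each } A\in\mathcal P\}$, and for $\mathbf v\in V_{\mathcal P}$, $A\in\mathcal P$, $\mathbf v_A$ is the constant value of $\mathbf v$ on $A$. If $\mathcal P=\{A_1,\dots,A_n\}$, the induced subgraph on $V_{\mathcal P}$ is isomorphic to $G^n$ via $\mathbf v\mapsto(\mathbf v_{A_1},\dots,\mathbf v_{A_n})$, so there are $i$ and a proper coloring $\phi$ of $G$ with $\Phi(\mathbf v)=\phi(\mathbf v_{A_i})$ for all $\mathbf v\in V_{\mathcal P}$; since $G$ has an edge, $A_i$ is uniquely determined and is denoted $I(\mathcal P)$. The greatest common refinement is $\mathcal P_1\sqcap\mathcal P_2=\{A\cap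 B: A\in\mathcal P_1, B\in\mathcal P_2, A\cap B\ne\emptyset\}$. *)

theory Defs
  imports Main "HOL-Library.FuncSet" "HOL-Library.Disjoint_Sets"
begin

definition simple_graph :: "('v \<Rightarrow> 'v \<Rightarrow> bool) \<Rightarrow> bool" where
  "simple_graph E \<longleftrightarrow> (\<forall>x y. E x y \<longrightarrow> E y x) \<and> (\<forall>x. \<not> E x x)"

definition proper_col :: "('v \<Rightarrow> 'v \<Rightarrow> bool) \<Rightarrow> ('v \<Rightarrow> 'c) \<Rightarrow> bool" where
  "proper_col E \<phi> \<longleftrightarrow> (\<forall>x y. E x y \<longrightarrow> \<phi> x \<noteq> \<phi> y)"

definition chromatic_number :: "('v \<Rightarrow> 'v \<Rightarrow> bool) \<Rightarrow> nat" where
  "chromatic_number E = (LEAST k. \<exists>\<phi>::'v \<Rightarrow> nat. proper_col E \<phi> \<and> (\<forall>x. \<phi> x < k))"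

definition pow_verts :: "nat \<Rightarrow> (nat \<Rightarrow> 'v) set" where
  "pow_verts n = PiE {..<n} (\<lambda>_. UNIV)"

definition pow_adj :: "('v \<Rightarrow> 'v \<Rightarrow> bool) \<Rightarrow> 'i set \<Rightarrow> ('i \<Rightarrow> 'v) \<Rightarrow> ('i \<Rightarrow> 'v) \<Rightarrow> bool" where
  "pow_adj E S v w \<longleftrightarrow> (\<forall>i\<in>S. E (v i) (w i))"

definition pow_k_coloring :: "('v \<Rightarrow> 'v \<Rightarrow> bool) \<Rightarrow> nat \<Rightarrow> nat \<Rightarrow> ((nat \<Rightarrow> 'v) \<Rightarrow> nat) \<Rightarrow> bool" where
  "pow_k_coloring E n k c \<longleftrightarrow>
     (\<forall>v\<in>pow_verts n. c v < k) \<and>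
     (\<forall>v\<in>pow_verts n. \<forall>w\<in>pow_verts n. pow_adj E {..<n} v w \<longrightarrow> c v \<noteq> c w)"

definition trivially_power_colorable :: "('v \<Rightarrow> 'v \<Rightarrow> bool) \<Rightarrow> bool" where
  "trivially_power_colorable E \<longleftrightarrow>
     (\<forall>n>0. \<forall>c. pow_k_coloring E n (chromatic_number E) c \<longrightarrow>
        (\<exists>i<n. \<exists>\<phi>::'v \<Rightarrow> nat. proper_col E \<phi> \<and> (\<forall>v\<in>pow_verts n. c v = \<phi> (v i))))"

(* a proper k-colouring of G^lambda, lambda = UNIV :: 'i set *)
definition big_k_coloring :: "('v \<Rightarrow> 'v \<Rightarrow> bool) \<Rightarrow> nat \<Rightarrow> (('i \<Rightarrow> 'v) \<Rightarrow> nat) \<Rightarrow> bool" where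
  "big_k_coloring E k \<Phi> \<longleftrightarrow> (\<forall>v. \<Phi> v < k) \<and> (\<forall>v w. pow_adj E UNIV v w \<longrightarrow> \<Phi> v \<noteq> \<Phi> w)"

definition finite_partition :: "'i set set \<Rightarrow> bool" where
  "finite_partition P \<longleftrightarrow> finite P \<and> partition_on UNIV P"

definition V_part :: "'i set set \<Rightarrow> ('i \<Rightarrow> 'v) set" where
  "V_part P = {v. \<forall>A\<in>P. \<forall>a\<in>A. \<forall>b\<in>A. v a = v b}"

definition is_I :: "('v \<Rightarrow> 'v \<Rightarrow> bool) \<Rightarrow> (('i \<Rightarrow> 'v) \<Rightarrow> nat) \<Rightarrow> 'i set set \<Rightarrow> 'i set \<Rightarrow> bool" where
  "is_I E \<Phi> P A \<longleftrightarrow> A \<in> P \<and>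
     (\<exists>\<phi>::'v \<Rightarrow> nat. proper_col E \<phi> \<and> (\<forall>v\<in>V_part P. \<forall>a\<in>A. \<Phi> v = \<phi> (v a)))"

definition I_part :: "('v \<Rightarrow> 'v \<Rightarrow> bool) \<Rightarrow> (('i \<Rightarrow> 'v) \<Rightarrow> nat) \<Rightarrow> 'i set set \<Rightarrow> 'i set" where
  "I_part E \<Phi> P = (THE A. is_I E \<Phi> P A)"

definition meet_part :: "'i set set \<Rightarrow> 'i set set \<Rightarrow> 'i set set" where
  "meet_part P1 P2 = {A \<inter> B | A B. A \<in> P1 \<and> B \<in> P2 \<and> A \<inter> B \<noteq> {}}"

end

theory Submission
  imports Defs
begin

lemma I_aux:
  assumes P: "partition_on UNIV P" and A: "A \<in> P" and B: "B \<in> P"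
    and C: "C \<subseteq> A" "c0 \<in> C"
    and xy: "E x y" and psi: "proper_col E \<psi>"
    and h1: "\<forall>v\<in>V_part P. \<forall>c\<in>C. \<Phi> v = \<phi> (v c)"
    and h2: "\<forall>v\<in>V_part P. \<forall>b\<in>B. \<Phi> v = \<psi> (v b)"
  shows "A = B"
proof (rule ccontr)
  assume AB: "A \<noteq> B"
  have dis: "\<And>D D'. D \<in> P \<Longrightarrow> D' \<in> P \<Longrightarrow> D \<noteq> D' \<Longrightarrow> D \<inter> D' = {}"
    using partition_onD2[OF P] by (auto simp: pairwise_def disjnt_def)
  have "B \<noteq> {}" using B partition_onD3[OF P] by auto
  then obtain b0 where b0: "b0 \<in> B" by blast
  define v where "v = (\<lambda>i::'a. x)"
  define w where "w = (\<lambda>i. if i \<in> B then y else x)"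
  have vV: "v \<in> V_part P" by (simp add: V_part_def v_def)
  have wV: "w \<in> V_part P"
    unfolding V_part_def w_def
  proof (intro CollectI ballI)
    fix D a b assume D: "D \<in> P" and a: "a \<in> D" and b: "b \<in> D"
    show "(if a \<in> B then y else x) = (if b \<in> B then y else x)"
    proof (cases "D = B")
      case True then show ?thesis using a b by simp
    next
      case False then have "D \<inter> B = {}" using dis D B by blast
      then show ?thesis using a b by auto
    qed
  qed
  have "A \<inter> B = {}" using dis A B AB by blast
  then have wc: "w c0 = x" using C by (auto simp: w_def)
  have "\<Phi> v = \<phi> x" using h1 vV C by (simp add: v_def)
  moreover have "\<Phi> w = \<phi> x" using h1 wV C wc by metis
  moreover have "\<Phi> v = \<psi> x" using h2 vV b0 by (simp add: v_def)
  moreover have "\<Phi> w = \<psi> y" using h2 wV b0 by (simp add: w_def)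
  moreover have "\<psi> x \<noteq> \<psi> y" using psi xy by (simp add: proper_col_def)
  ultimately show False by simp
qed

lemma I_exists:
  fixes E :: "'v \<Rightarrow> 'v \<Rightarrow> bool" and \<Phi> :: "('i \<Rightarrow> 'v) \<Rightarrow> nat"
  assumes tpc: "trivially_power_colorable E"
    and bkc: "big_k_coloring E (chromatic_number E) \<Phi>"
    and fp: "finite_partition P"
  shows "\<exists>A. is_I E \<Phi> P A"
proof -
  have P: "partition_on UNIV P" and fin: "finite P" using fp by (auto simp: finite_partition_def)
  have dis: "\<And>D D'. D \<in> P \<Longrightarrow> D' \<in> P \<Longrightarrow> D \<noteq> D' \<Longrightarrow> D \<inter> D' = {}"
    using partition_onD2[OF P] by (auto simp: pairwise_def disjnt_def)
  have cov: "\<And>i. \<exists>D\<in>P. i \<in> D" using partition_onD1[OF P] by blast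
  define n where "n = card P"
  have "P \<noteq> {}" using cov by blast
  then have npos: "n > 0" using fin by (simp add: n_def card_gt_0_iff)
  obtain f where f: "bij_betw f {..<n} P"
    using ex_bij_betw_nat_finite[OF fin] by (auto simp: n_def atLeast0LessThan)
  have fP: "\<And>j. j < n \<Longrightarrow> f j \<in> P" using f by (auto simp: bij_betw_def)
  have ex1: "\<And>i. \<exists>!j. j < n \<and> i \<in> f j"
  proof -
    fix i
    obtain D where D: "D \<in> P" "i \<in> D" using cov by blast
    then obtain j where j: "j < n" "f j = D" using f by (auto simp: bij_betw_def)
    show "\<exists>!j. j < n \<and> i \<in> f j"
    proof (rule ex1I[of _ j])
      show "j < n \<and> i \<in> f j" using j D by simp
    next
      fix j' assume j': "j' < n \<and> i \<in> f j'"
      then have "f j' = f j" using dis[OF fP fP, of j' j] j D by blast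
      then show "j' = j" using f j j' by (auto simp: bij_betw_def inj_on_def)
    qed
  qed
  define idx where "idx i = (THE j. j < n \<and> i \<in> f j)" for i
  have idx: "\<And>i. idx i < n \<and> i \<in> f (idx i)"
    unfolding idx_def using ex1 by (rule theI')
  define c where "c u = \<Phi> (\<lambda>i. u (idx i))" for u :: "nat \<Rightarrow> 'v"
  have col: "pow_k_coloring E n (chromatic_number E) c"
    unfolding pow_k_coloring_def
  proof (intro conjI ballI impI)
    fix v :: "nat \<Rightarrow> 'v" show "c v < chromatic_number E"
      using bkc by (simp add: big_k_coloring_def c_def)
  next
    fix v w :: "nat \<Rightarrow> 'v" assume "pow_adj E {..<n} v w"
    then have "pow_adj E UNIV (\<lambda>i. v (idx i)) (\<lambda>i. w (idx i))"
      using idx by (simp add: pow_adj_def)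
    then show "c v \<noteq> c w" using bkc by (simp add: big_k_coloring_def c_def)
  qed
  then obtain i \<phi> where i: "i < n" and phi: "proper_col E \<phi>"
    and ci: "\<forall>u\<in>pow_verts n. c u = \<phi> (u i)"
    using tpc[unfolded trivially_power_colorable_def, rule_format, OF npos col] by blast
  have "is_I E \<Phi> P (f i)"
    unfolding is_I_def
  proof (intro conjI exI[of _ \<phi>] ballI)
    show "f i \<in> P" using fP i .
    show "proper_col E \<phi>" by (rule phi)
  next
    fix v :: "'i \<Rightarrow> 'v" and a assume v: "v \<in> V_part P" and a: "a \<in> f i"
    define u where "u = restrict (\<lambda>j. v (SOME a. a \<in> f j)) {..<n}"
    have uP: "u \<in> pow_verts n" by (simp add: u_def pow_verts_def)
    have same: "\<And>j b. j < n \<Longrightarrow> b \<in> f j \<Longrightarrow> v (SOME a. a \<in> f j) = v b"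
    proof -
      fix j b assume j: "j < n" and b: "b \<in> f j"
      then have s: "(SOME a. a \<in> f j) \<in> f j" by (meson someI)
      have "\<forall>A\<in>P. \<forall>a\<in>A. \<forall>b\<in>A. v a = v b" using v by (simp only: V_part_def mem_Collect_eq)
      then show "v (SOME a. a \<in> f j) = v b" using fP[OF j] b s by blast
    qed
    have "(\<lambda>k. u (idx k)) = v"
    proof
      fix k show "u (idx k) = v k" using idx[of k] same[of "idx k" k] by (simp add: u_def)
    qed
    then have "\<Phi> v = c u" by (simp add: c_def)
    also have "\<dots> = \<phi> (u i)" using ci uP by blast
    also have "u i = v a" using i a same[of i a] by (simp add: u_def)
    finally show "\<Phi> v = \<phi> (v a)" .
  qed
  then show ?thesis by blast
qed

lemma I_part_prop:
  fixes E :: "'v \<Rightarrow> 'v \<Rightarrow> bool" and \<Phi> :: "('i \<Rightarrow> 'v) \<Rightarrow> nat"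
  assumes tpc: "trivially_power_colorable E" and xy: "E x y"
    and bkc: "big_k_coloring E (chromatic_number E) \<Phi>"
    and fp: "finite_partition P"
  shows "is_I E \<Phi> P (I_part E \<Phi> P)"
proof -
  have P: "partition_on UNIV P" using fp by (auto simp: finite_partition_def)
  obtain A where A: "is_I E \<Phi> P A" using I_exists[OF tpc bkc fp] by blast
  show ?thesis unfolding I_part_def
  proof (rule theI[of _ A])
    show "is_I E \<Phi> P A" by (rule A)
  next
    fix B assume B: "is_I E \<Phi> P B"
    obtain \<phi> where h1: "\<forall>v\<in>V_part P. \<forall>a\<in>B. \<Phi> v = \<phi> (v a)" and BP: "B \<in> P"
      using B by (auto simp: is_I_def)
    obtain \<psi> where ps: "proper_col E \<psi>" and h2: "\<forall>v\<in>V_part P. \<forall>a\<in>A. \<Phi> v = \<psi> (v a)"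
      and AP: "A \<in> P" using A by (auto simp: is_I_def)
    have "B \<noteq> {}" using partition_onD3[OF P] BP by auto
    then obtain b0 where b0: "b0 \<in> B" by blast
    show "B = A" by (rule I_aux[OF P BP AP order_refl b0 xy ps h1 h2])
  qed
qed

lemma meet_partition:
  assumes "finite_partition P1" "finite_partition P2"
  shows "finite_partition (meet_part P1 P2)"
proof -
  have P1: "partition_on UNIV P1" "finite P1" and P2: "partition_on UNIV P2" "finite P2"
    using assms by (auto simp: finite_partition_def)
  have dis1: "\<And>D D'. D \<in> P1 \<Longrightarrow> D' \<in> P1 \<Longrightarrow> D \<noteq> D' \<Longrightarrow> D \<inter> D' = {}"
    using partition_onD2[OF P1(1)] by (auto simp: pairwise_def disjnt_def)
  have dis2: "\<And>D D'. D \<in> P2 \<Longrightarrow> D' \<in> P2 \<Longrightarrow> D \<noteq> D' \<Longrightarrow> D \<inter> D' = {}"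
    using partition_onD2[OF P2(1)] by (auto simp: pairwise_def disjnt_def)
  have "meet_part P1 P2 \<subseteq> (\<lambda>(A,B). A \<inter> B) ` (P1 \<times> P2)"
    by (auto simp: meet_part_def)
  then have fin: "finite (meet_part P1 P2)" using P1 P2 by (meson finite_SigmaI finite_imageI finite_subset)
  have "partition_on UNIV (meet_part P1 P2)"
  proof (rule partition_onI)
    show "\<Union> (meet_part P1 P2) = UNIV"
    proof (rule set_eqI, rule iffI)
      fix i :: 'a
      obtain A where "A \<in> P1" "i \<in> A" using partition_onD1[OF P1(1)] by blast
      moreover obtain B where "B \<in> P2" "i \<in> B" using partition_onD1[OF P2(1)] by blast
      ultimately show "i \<in> \<Union> (meet_part P1 P2)" by (auto simp: meet_part_def)
    qed simp
  next
    fix p q assume "p \<in> meet_part P1 P2" "q \<in> meet_part P1 P2" "p \<noteq> q"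
    then obtain A B A' B' where "p = A \<inter> B" "q = A' \<inter> B'" "A \<in> P1" "A' \<in> P1" "B \<in> P2" "B' \<in> P2"
      by (auto simp: meet_part_def)
    then show "disjnt p q" using dis1[of A A'] dis2[of B B'] \<open>p \<noteq> q\<close>
      by (auto simp: disjnt_def)
  next
    show "{} \<notin> meet_part P1 P2" by (auto simp: meet_part_def)
  qed
  then show ?thesis using fin by (simp add: finite_partition_def)
qed

theorem mainTheorem17:
  fixes E :: "'v::finite \<Rightarrow> 'v \<Rightarrow> bool"
    and \<Phi> :: "('i \<Rightarrow> 'v) \<Rightarrow> nat"
    and P1 P2 :: "'i set set"
  assumes "simple_graph E"
    and "\<exists>x y. E x y"
    and "trivially_power_colorable E"
    and "infinite (UNIV :: 'i set)"
    and "big_k_coloring E (chromatic_number E) \<Phi>"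
    and "finite_partition P1"
    and "finite_partition P2"
  shows "I_part E \<Phi> (meet_part P1 P2) = I_part E \<Phi> P1 \<inter> I_part E \<Phi> P2"
proof -
  obtain x y where xy: "E x y" using assms(2) by blast
  define Q where "Q = meet_part P1 P2"
  have fQ: "finite_partition Q" using meet_partition[OF assms(6,7)] by (simp add: Q_def)
  have IQ: "is_I E \<Phi> Q (I_part E \<Phi> Q)" using I_part_prop[OF assms(3) xy assms(5) fQ] .
  have I1: "is_I E \<Phi> P1 (I_part E \<Phi> P1)" using I_part_prop[OF assms(3) xy assms(5,6)] .
  have I2: "is_I E \<Phi> P2 (I_part E \<Phi> P2)" using I_part_prop[OF assms(3) xy assms(5,7)] .
  have Pa1: "partition_on UNIV P1" and Pa2: "partition_on UNIV P2"
    using assms(6,7) by (auto simp: finite_partition_def)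
  obtain \<phi> where phi: "\<forall>v\<in>V_part Q. \<forall>a\<in>I_part E \<Phi> Q. \<Phi> v = \<phi> (v a)"
    using IQ by (auto simp: is_I_def)
  have "I_part E \<Phi> Q \<in> Q" using IQ by (simp add: is_I_def)
  then obtain A B where AB: "I_part E \<Phi> Q = A \<inter> B" "A \<in> P1" "B \<in> P2" "A \<inter> B \<noteq> {}"
    by (auto simp: Q_def meet_part_def)
  then obtain c0 where c0: "c0 \<in> I_part E \<Phi> Q" by blast
  have V1: "V_part P1 \<subseteq> V_part Q" and V2: "V_part P2 \<subseteq> V_part Q"
    by (auto simp: V_part_def Q_def meet_part_def)
  have h1: "\<forall>v\<in>V_part P1. \<forall>c\<in>I_part E \<Phi> Q. \<Phi> v = \<phi> (v c)" using phi V1 by blast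
  have h2: "\<forall>v\<in>V_part P2. \<forall>c\<in>I_part E \<Phi> Q. \<Phi> v = \<phi> (v c)" using phi V2 by blast
  obtain \<psi>1 where ps1: "proper_col E \<psi>1" and pv1: "\<forall>v\<in>V_part P1. \<forall>a\<in>I_part E \<Phi> P1. \<Phi> v = \<psi>1 (v a)"
    and pm1: "I_part E \<Phi> P1 \<in> P1" using I1 by (auto simp: is_I_def)
  have sub1: "I_part E \<Phi> Q \<subseteq> A" using AB(1) by blast
  have eq1: "A = I_part E \<Phi> P1"
    by (rule I_aux[OF Pa1 AB(2) pm1 sub1 c0 xy ps1 h1 pv1])
  obtain \<psi>2 where ps2: "proper_col E \<psi>2" and pv2: "\<forall>v\<in>V_part P2. \<forall>a\<in>I_part E \<Phi> P2. \<Phi> v = \<psi>2 (v a)"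
    and pm2: "I_part E \<Phi> P2 \<in> P2" using I2 by (auto simp: is_I_def)
  have sub2: "I_part E \<Phi> Q \<subseteq> B" using AB(1) by blast
  have eq2: "B = I_part E \<Phi> P2"
    by (rule I_aux[OF Pa2 AB(3) pm2 sub2 c0 xy ps2 h2 pv2])
  have fin: "I_part E \<Phi> Q = I_part E \<Phi> P1 \<inter> I_part E \<Phi> P2"
    using AB(1) eq1 eq2 by (metis)
  then show ?thesis by (simp only: Q_def)
qed

end
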